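(* Assume the subexponential regime $a_T/T\to0$. Let $\hat c\in\mathcal C$ satisfy the out-of-sample guarantee with speed $(a_T)$. Then either $\lim_{T\to\infty}\hat c(x,\mathbb P,T)=c(x,\mathbb P)$ for all $x\in\mathcal X,\mathbb P\in\mathcal P$, or there exists $\hat c'\in\mathcal C$ satisfying the out-of-sample guarantee with speed $(a_T)$ such that $\hat c'\preceq_{\mathcal C}\hat c$ and $\hat c'\not\equiv\hat c$.
   Context: Setting: $\Sigma=\{1,\dots,d\}$ ($d\ge2$) is finite; $\mathcal P\subset\mathbb R^d$ is the probability simplex over $\Sigma$ and $\mathcal P^o$ its relative interior (all entries positive). $\mathcal X\subset\mathbb R^n$ is compact and $\ell:\mathcal X\times\Sigma\to\mathbb R$ is continuous in $x$ for each $i$. For $x\in\mathcal X$, $\mu\in\mathbb R^d$ let $c(x,\mu)=\sum_{i\in\Sigma}\ell(x,i)\mu(i)$. Data $\xi_1,\xi_2,\dots$ are i.i.d. with law $\mathbb P\in\mathcal P$, $\mathbb P^\infty$ denotes their joint law, and $\hat{\mathbb P}_T(i)=\frac1T\sum_{t=1}^T\mathbf 1\{\xi_t=i\}$. $(a_T)_{T\ge1}$ is a sequence of positive reals with $a_T\to\infty$. A predictor is a sequence $\hat c=(\hat c(\cdot,\cdot,T))_{T\in\mathbb N}$ of functions $\mathcal X\times\mathcal P\to\mathbb R$. It is regular, written $\hat c\in\mathcal C$, if (i) the sequence $(\hat c(\cdot,\cdot,T))_T$ is uniformly bounded and equicontinuous on $\mathcal X\times\mathcal P$, and (ii) each $\hat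 c(x,\cdot,T)$ is differentiable in $\mathbb P$ and the sequence of derivative maps $(x,\mathbb P)\mapsto\nabla_{\mathbb P}\hat c(x,\mathbb P,T)$ is uniformly bounded and equicontinuous. (A sequence $(f_T)$ is equicontinuous if for every point $y$ and $\varepsilon>0$ there is a neighbourhood $U$ of $y$ with $|f_T(y)-f_T(z)|<\varepsilon$ for all $z\in U$ and all $T$.) Out-of-sample guarantee with speed $(a_T)$: for all $x\in\mathcal X$ and $\mathbb P\in\mathcal P^o$, $\limsup_{T\to\infty}\frac1{a_T}\log\mathbb P^\infty\big(c(x,\mathbb P)>\hat c(x,\hat{\mathbb P}_T,T)\big)\le-1$. Order: $\hat c_1\preceq_{\mathcal C}\hat c_2$ iff for all $(x,\mathbb P)\in\mathcal X\times\mathcal P^o$, $\limsup_{T\to\infty}\frac{|\hat c_1(x,\mathbb P,T)-c(x,\mathbb P)|}{|\hat c_2(x,\mathbb P,T)-c(x,\mathbb P)|}\le1$, with the convention $0/0=1$. Equivalence: $\hat c_1\equiv\hat c_2$ iff $|\hat c_1(x,\mathbb P,T)-c(x,\mathbb P)|/|\hat c_2(x,\mathbb P,T)-c(x,\mathbb P)|\to1$ as $T\to\infty$ for all $(x,\mathbb P)$ (convention $0/0=1$). *)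

theory Defs
  imports "HOL-Analysis.Analysis"
begin

text \<open>The alphabet Sigma is a finite type 'd; distributions are vectors in real^'d.\<close>

definition prob_simplex :: "(real ^ 'd::finite) set" where
  "prob_simplex = {p. (\<forall>i. 0 \<le> p $ i) \<and> (\<Sum>i\<in>UNIV. p $ i) = 1}"

definition prob_simplex_int :: "(real ^ 'd::finite) set" where
  "prob_simplex_int = {p. (\<forall>i. 0 < p $ i) \<and> (\<Sum>i\<in>UNIV. p $ i) = 1}"

definition cost :: "('x \<Rightarrow> 'd::finite \<Rightarrow> real) \<Rightarrow> 'x \<Rightarrow> real ^ 'd \<Rightarrow> real" where
  "cost l x mu = (\<Sum>i\<in>UNIV. l x i * mu $ i)"

definition empirical :: "(nat \<Rightarrow> 'd::finite) \<Rightarrow> nat \<Rightarrow> real ^ 'd" where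
  "empirical \<omega> T = (\<chi> i. real (card {t\<in>{..<T}. \<omega> t = i}) / real T)"

text \<open>P^infinity of an event E that depends only on the first T samples xi_1..xi_T,
  written out as the finite-dimensional marginal of the i.i.d. product law.\<close>
definition prob_iid :: "real ^ 'd::finite \<Rightarrow> nat \<Rightarrow> ((nat \<Rightarrow> 'd) \<Rightarrow> bool) \<Rightarrow> real" where
  "prob_iid P T E = (\<Sum>\<omega>\<in>{\<omega> \<in> PiE {..<T} (\<lambda>_. UNIV). E \<omega>}. \<Prod>t<T. P $ (\<omega> t))"

definition elog :: "real \<Rightarrow> ereal" where
  "elog p = (if p \<le> 0 then -\<infinity> else ereal (ln p))"

definition unif_bounded :: "'a set \<Rightarrow> (nat \<Rightarrow> 'a \<Rightarrow> 'b::real_normed_vector) \<Rightarrow> bool" where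
  "unif_bounded S f \<longleftrightarrow> (\<exists>B. \<forall>T. \<forall>y\<in>S. norm (f T y) \<le> B)"

definition equicont :: "'a::topological_space set \<Rightarrow> (nat \<Rightarrow> 'a \<Rightarrow> 'b::metric_space) \<Rightarrow> bool" where
  "equicont S f \<longleftrightarrow> (\<forall>y\<in>S. \<forall>e>0. \<exists>U. open U \<and> y \<in> U \<and>
       (\<forall>T. \<forall>z\<in>U \<inter> S. dist (f T y) (f T z) < e))"

definition regular :: "'x::euclidean_space set \<Rightarrow> ('x \<Rightarrow> real ^ 'd::finite \<Rightarrow> nat \<Rightarrow> real) \<Rightarrow> bool" where
  "regular X chat \<longleftrightarrow>
     unif_bounded (X \<times> prob_simplex) (\<lambda>T (x,p). chat x p T) \<and>
     equicont (X \<times> prob_simplex) (\<lambda>T (x,p). chat x p T) \<and>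
     (\<exists>D :: 'x \<Rightarrow> real ^ 'd \<Rightarrow> nat \<Rightarrow> real ^ 'd.
        (\<forall>T. \<forall>x\<in>X. \<forall>p\<in>prob_simplex.
           ((\<lambda>q. chat x q T) has_derivative (\<lambda>h. D x p T \<bullet> h)) (at p within prob_simplex)) \<and>
        unif_bounded (X \<times> prob_simplex) (\<lambda>T (x,p). D x p T) \<and>
        equicont (X \<times> prob_simplex) (\<lambda>T (x,p). D x p T))"

definition oos_guarantee ::
  "'x set \<Rightarrow> ('x \<Rightarrow> 'd::finite \<Rightarrow> real) \<Rightarrow> (nat \<Rightarrow> real) \<Rightarrow> ('x \<Rightarrow> real ^ 'd \<Rightarrow> nat \<Rightarrow> real) \<Rightarrow> bool" where
  "oos_guarantee X l a chat \<longleftrightarrow>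
     (\<forall>x\<in>X. \<forall>P\<in>prob_simplex_int.
        limsup (\<lambda>T. elog (prob_iid P T (\<lambda>\<omega>. cost l x P > chat x (empirical \<omega> T) T)) / ereal (a T))
          \<le> -1)"

definition err_ratio :: "real \<Rightarrow> real \<Rightarrow> ereal" where
  "err_ratio u v = (if u = 0 \<and> v = 0 then 1 else if v = 0 then \<infinity> else ereal (\<bar>u\<bar> / \<bar>v\<bar>))"

definition pred_le ::
  "'x set \<Rightarrow> ('x \<Rightarrow> 'd::finite \<Rightarrow> real) \<Rightarrow> ('x \<Rightarrow> real ^ 'd \<Rightarrow> nat \<Rightarrow> real) \<Rightarrow> ('x \<Rightarrow> real ^ 'd \<Rightarrow> nat \<Rightarrow> real) \<Rightarrow> bool" where
  "pred_le X l c1 c2 \<longleftrightarrow>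
     (\<forall>x\<in>X. \<forall>P\<in>prob_simplex_int.
        limsup (\<lambda>T. err_ratio (c1 x P T - cost l x P) (c2 x P T - cost l x P)) \<le> 1)"

definition pred_equiv ::
  "'x set \<Rightarrow> ('x \<Rightarrow> 'd::finite \<Rightarrow> real) \<Rightarrow> ('x \<Rightarrow> real ^ 'd \<Rightarrow> nat \<Rightarrow> real) \<Rightarrow> ('x \<Rightarrow> real ^ 'd \<Rightarrow> nat \<Rightarrow> real) \<Rightarrow> bool" where
  "pred_equiv X l c1 c2 \<longleftrightarrow>
     (\<forall>x\<in>X. \<forall>P\<in>prob_simplex_int.
        ((\<lambda>T. err_ratio (c1 x P T - cost l x P) (c2 x P T - cost l x P)) \<longlongrightarrow> 1) sequentially)"

end

theory Submission
  imports Defs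
begin


lemma exp_le_quad:
  fixes x :: real assumes "\<bar>x\<bar> \<le> 1" shows "exp x \<le> 1 + x + x^2"
proof (cases "x \<ge> 0")
  case True then show ?thesis using exp_bound[of x] assms by auto
next
  case False
  define y where "y = -x"
  have y: "0 \<le> y" "y \<le> 1" using False assms by (auto simp: y_def)
  have e: "1 + y + y^2/2 \<le> exp y" using exp_lower_Taylor_quadratic[OF y(1)] .
  have "0 \<le> y^2/2" by simp
  hence pos: "0 < 1 + y + y^2/2" using y by linarith
  have "(1 + y + y^2/2) * (1 - y + y^2) \<ge> 1"
  proof -
    have "(1 + y + y^2/2) * (1 - y + y^2) = 1 + y^2/2 + y^3/2 + y^4/2"
      by (simp add: field_simps power2_eq_square power3_eq_cube power4_eq_xxxx)
    moreover have "y^2/2 + y^3/2 + y^4/2 \<ge> 0" using y by simp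
    ultimately show ?thesis by linarith
  qed
  hence "1 / (1 + y + y^2/2) \<le> 1 - y + y^2" using pos by (simp add: divide_le_eq mult.commute)
  moreover have "exp x = 1 / exp y" by (simp add: y_def exp_minus field_simps)
  moreover have "1 / exp y \<le> 1 / (1 + y + y^2/2)" using e pos by (intro divide_left_mono) auto
  ultimately show ?thesis by (simp add: y_def)
qed

lemma conc:
  fixes P :: "real ^ 'd::finite" and w :: "'d \<Rightarrow> real"
  assumes P: "P \<in> prob_simplex" and mean: "(\<Sum>i\<in>UNIV. P $ i * w i) = 0"
    and wR: "\<And>i. \<bar>w i\<bar> \<le> R" and lam: "0 \<le> lam" "lam * R \<le> 1"
  shows "prob_iid P T (\<lambda>\<omega>. (\<Sum>t<T. w (\<omega> t)) > \<rho>) \<le> exp (- lam * \<rho> + real T * (lam^2 * R^2))"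
proof -
  have Pnn: "\<And>i. 0 \<le> P $ i" and Psum: "(\<Sum>i\<in>UNIV. P $ i) = 1" using P by (auto simp: prob_simplex_def)
  define A where "A = PiE {..<T} (\<lambda>_. UNIV :: 'd set)"
  have finA: "finite A" unfolding A_def by (intro finite_PiE) auto
  define g where "g = (\<lambda>\<omega>. (\<Prod>t<T. P $ (\<omega> t)) * exp (lam * ((\<Sum>t<T. w (\<omega> t)) - \<rho>)))"
  have "prob_iid P T (\<lambda>\<omega>. (\<Sum>t<T. w (\<omega> t)) > \<rho>) = (\<Sum>\<omega>\<in>{\<omega>\<in>A. (\<Sum>t<T. w (\<omega> t)) > \<rho>}. \<Prod>t<T. P $ (\<omega> t))"
    by (simp add: prob_iid_def A_def)
  also have "\<dots> \<le> (\<Sum>\<omega>\<in>{\<omega>\<in>A. (\<Sum>t<T. w (\<omega> t)) > \<rho>}. g \<omega>)"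
  proof (rule sum_mono)
    fix \<omega> assume "\<omega> \<in> {\<omega>\<in>A. (\<Sum>t<T. w (\<omega> t)) > \<rho>}"
    hence "1 \<le> exp (lam * ((\<Sum>t<T. w (\<omega> t)) - \<rho>))" using lam by auto
    moreover have "0 \<le> (\<Prod>t<T. P $ (\<omega> t))" using Pnn by (simp add: prod_nonneg)
    ultimately show "(\<Prod>t<T. P $ (\<omega> t)) \<le> g \<omega>" unfolding g_def
      by (metis mult.right_neutral mult_left_mono)
  qed
  also have "\<dots> \<le> (\<Sum>\<omega>\<in>A. g \<omega>)"
    by (rule sum_mono2[OF finA]) (auto simp: g_def Pnn prod_nonneg)
  also have "(\<Sum>\<omega>\<in>A. g \<omega>) = exp (- lam * \<rho>) * (\<Sum>\<omega>\<in>A. \<Prod>t<T. P $ (\<omega> t) * exp (lam * w (\<omega> t)))"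
  proof -
    have "g \<omega> = exp (- lam * \<rho>) * (\<Prod>t<T. P $ (\<omega> t) * exp (lam * w (\<omega> t)))" for \<omega>
    proof -
      have "exp (lam * ((\<Sum>t<T. w (\<omega> t)) - \<rho>)) = exp (- lam * \<rho>) * exp (\<Sum>t<T. lam * w (\<omega> t))"
        by (simp add: sum_distrib_left algebra_simps flip: exp_add)
      also have "\<dots> = exp (- lam * \<rho>) * (\<Prod>t<T. exp (lam * w (\<omega> t)))" by (simp add: exp_sum)
      finally show ?thesis by (simp add: g_def prod.distrib)
    qed
    thus ?thesis by (simp add: sum_distrib_left)
  qed
  also have "(\<Sum>\<omega>\<in>A. \<Prod>t<T. P $ (\<omega> t) * exp (lam * w (\<omega> t))) = (\<Prod>t<T. \<Sum>i\<in>UNIV. P $ i * exp (lam * w i))"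
    unfolding A_def by (rule prod_sum_PiE[symmetric]) auto
  also have "\<dots> = (\<Sum>i\<in>UNIV. P $ i * exp (lam * w i)) ^ T" by simp
  also have "\<dots> \<le> exp (lam^2 * R^2) ^ T"
  proof (rule power_mono)
    have "(\<Sum>i\<in>UNIV. P $ i * exp (lam * w i)) \<le> (\<Sum>i\<in>UNIV. P $ i * (1 + lam * w i + lam^2 * R^2))"
    proof (rule sum_mono)
      fix i
      have "\<bar>lam * w i\<bar> = lam * \<bar>w i\<bar>" using lam by (simp add: abs_mult)
      moreover have "lam * \<bar>w i\<bar> \<le> lam * R" using wR[of i] lam by (intro mult_left_mono) auto
      ultimately have "\<bar>lam * w i\<bar> \<le> 1" using lam by linarith
      hence "exp (lam * w i) \<le> 1 + lam * w i + (lam * w i)^2" by (rule exp_le_quad)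
      moreover have "(lam * w i)^2 \<le> lam^2 * R^2"
      proof -
        have "\<bar>w i\<bar>^2 \<le> R^2" using wR[of i] by (intro power_mono) auto
        thus ?thesis using lam by (simp add: power_mult_distrib mult_left_mono)
      qed
      ultimately show "P $ i * exp (lam * w i) \<le> P $ i * (1 + lam * w i + lam^2 * R^2)"
        using Pnn[of i] by (intro mult_left_mono) auto
    qed
    also have "\<dots> = (\<Sum>i\<in>UNIV. P $ i) + lam * (\<Sum>i\<in>UNIV. P $ i * w i) + lam^2 * R^2 * (\<Sum>i\<in>UNIV. P $ i)"
      by (simp add: algebra_simps sum.distrib sum_distrib_left sum_distrib_right)
    also have "\<dots> = 1 + lam^2 * R^2" using Psum mean by simp
    also have "\<dots> \<le> exp (lam^2 * R^2)" by (rule exp_ge_add_one_self)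
    finally show "(\<Sum>i\<in>UNIV. P $ i * exp (lam * w i)) \<le> exp (lam^2 * R^2)" .
    show "0 \<le> (\<Sum>i\<in>UNIV. P $ i * exp (lam * w i))" using Pnn by (simp add: sum_nonneg)
  qed
  also have "exp (lam^2 * R^2) ^ T = exp (real T * (lam^2 * R^2))" by (simp add: exp_of_nat_mult)
  finally show ?thesis by (simp add: exp_add[symmetric] algebra_simps mult_left_mono)
qed




lemma elog_div: "a > 0 \<Longrightarrow> elog p / ereal a = (if p \<le> 0 then -\<infinity> else ereal (ln p / a))"
  by (simp add: elog_def ereal_divide)

lemma limsup_elog:
  fixes q p1 p2 a :: "nat \<Rightarrow> real"
  assumes a_pos: "\<And>T. a T > 0" and a_inf: "filterlim a at_top sequentially"
    and h1: "limsup (\<lambda>T. elog (p1 T) / ereal (a T)) \<le> -1"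
    and h2: "eventually (\<lambda>T. p2 T \<le> exp (-2 * a T)) sequentially"
    and hq: "\<And>T. q T \<le> p1 T + p2 T"
  shows "limsup (\<lambda>T. elog (q T) / ereal (a T)) \<le> -1"
  unfolding Limsup_le_iff
proof (intro allI impI)
  fix y :: ereal assume y: "y > -1"
  show "\<forall>\<^sub>F T in sequentially. elog (q T) / ereal (a T) < y"
  proof (cases y)
    case PInf
    show ?thesis using a_pos by (auto simp: PInf elog_div)
  next
    case MInf with y show ?thesis by simp
  next
    case (real y0)
    with y have y0: "y0 > -1" by (simp add: one_ereal_def)
    define m where "m = (-1 + min y0 0) / 2"
    have m: "m > -1" "m < y0" "m \<le> 0" using y0 by (auto simp: m_def)
    have ev1: "\<forall>\<^sub>F T in sequentially. elog (p1 T) / ereal (a T) < ereal m"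
    proof -
      have "(-1::ereal) < ereal m" using m(1) by (simp add: one_ereal_def)
      thus ?thesis using h1 unfolding Limsup_le_iff by blast
    qed
    have ev3: "\<forall>\<^sub>F T in sequentially. a T \<ge> ln 2 / (y0 - m) + 1"
      using a_inf by (simp add: filterlim_at_top)
    show ?thesis using ev1 h2 ev3
    proof eventually_elim
      case (elim T)
      have aT: "a T > 0" by (rule a_pos)
      have p1: "p1 T \<le> exp (m * a T)"
      proof (cases "p1 T \<le> 0")
        case True thus ?thesis by (meson exp_ge_zero order_trans)
      next
        case False
        hence "ln (p1 T) / a T < m" using elim(1) aT by (simp add: elog_div)
        hence "ln (p1 T) < m * a T" using aT by (simp add: divide_less_eq)
        hence "exp (ln (p1 T)) < exp (m * a T)" by simp
        thus ?thesis using False by simp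
      qed
      have p2: "p2 T \<le> exp (m * a T)"
      proof -
        have "-2 * a T \<le> m * a T" using m aT by (intro mult_right_mono) auto
        thus ?thesis using elim(2) by (meson exp_le_cancel_iff order_trans)
      qed
      have qle: "q T \<le> 2 * exp (m * a T)" using hq[of T] p1 p2 by linarith
      show ?case
      proof (cases "q T \<le> 0")
        case True thus ?thesis using aT by (simp add: elog_div real)
      next
        case False
        have "ln (q T) \<le> ln (2 * exp (m * a T))" using False qle by simp
        also have "\<dots> = ln 2 + m * a T" by (simp add: ln_mult)
        finally have lq: "ln (q T) \<le> ln 2 + m * a T" .
        have "ln 2 < (y0 - m) * a T"
        proof -
          have "ln 2 / (y0 - m) < a T" using elim(3) by linarith
          thus ?thesis using m by (simp add: divide_less_eq mult.commute)
        qed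
        hence "ln (q T) < y0 * a T" using lq by (simp add: algebra_simps)
        hence "ln (q T) / a T < y0" using aT by (simp add: divide_less_eq)
        thus ?thesis using False aT by (simp add: elog_div real)
      qed
    qed
  qed
qed

lemma err_ratio_le1: "(u = 0 \<and> v = 0) \<or> (v \<noteq> 0 \<and> \<bar>u\<bar> \<le> \<bar>v\<bar>) \<Longrightarrow> err_ratio u v \<le> 1"
  by (auto simp: err_ratio_def divide_le_eq)

lemma err_ratio_lek: "v \<noteq> 0 \<Longrightarrow> \<bar>u\<bar> \<le> k * \<bar>v\<bar> \<Longrightarrow> err_ratio u v \<le> ereal k"
  by (auto simp: err_ratio_def divide_le_eq)

lemma limsup_le1: "(\<And>T. f T \<le> (1::ereal)) \<Longrightarrow> limsup f \<le> 1"
  by (rule Limsup_bounded) auto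

lemma not_tendsto1:
  assumes "frequently (\<lambda>T. f T \<le> ereal (5/8)) sequentially"
  shows "\<not> ((f \<longlongrightarrow> (1::ereal)) sequentially)"
proof
  assume "(f \<longlongrightarrow> 1) sequentially"
  hence "eventually (\<lambda>T. f T > ereal (3/4)) sequentially"
    by (rule order_tendstoD) (simp add: one_ereal_def)
  with assms have "frequently (\<lambda>T. f T > ereal (3/4) \<and> f T \<le> ereal (5/8)) sequentially"
    by (rule frequently_eventually_conj)
  hence "frequently (\<lambda>T. False) sequentially"
  proof (rule frequently_elim1)
    fix T assume "f T > ereal (3/4) \<and> f T \<le> ereal (5/8)"
    moreover have "ereal (5/8) < ereal (3/4)" by simp
    ultimately show False by (meson less_asym order.strict_trans1)
  qed
  thus False by simp
qed




lemma equicont_add: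
  fixes F G :: "nat \<Rightarrow> 'a::topological_space \<Rightarrow> 'b::real_normed_vector"
  assumes "equicont S F" "equicont S G"
  shows "equicont S (\<lambda>T y. F T y + G T y)"
  unfolding equicont_def
proof (intro ballI allI impI)
  fix y e assume y: "y \<in> S" and e: "(e::real) > 0"
  obtain U1 where U1: "open U1" "y \<in> U1" "\<forall>T. \<forall>z\<in>U1 \<inter> S. dist (F T y) (F T z) < e/2"
    using assms(1) y e unfolding equicont_def by (meson half_gt_zero)
  obtain U2 where U2: "open U2" "y \<in> U2" "\<forall>T. \<forall>z\<in>U2 \<inter> S. dist (G T y) (G T z) < e/2"
    using assms(2) y e unfolding equicont_def by (meson half_gt_zero)
  show "\<exists>U. open U \<and> y \<in> U \<and> (\<forall>T. \<forall>z\<in>U \<inter> S. dist (F T y + G T y) (F T z + G T z) < e)"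
  proof (intro exI conjI allI ballI)
    show "open (U1 \<inter> U2)" "y \<in> U1 \<inter> U2" using U1 U2 by auto
    fix T z assume "z \<in> U1 \<inter> U2 \<inter> S"
    hence "dist (F T y) (F T z) < e/2" "dist (G T y) (G T z) < e/2" using U1 U2 by auto
    thus "dist (F T y + G T y) (F T z + G T z) < e"
      using dist_triangle_add[of "F T y" "G T y" "F T z" "G T z"] by linarith
  qed
qed

lemma equicont_uminus:
  fixes F :: "nat \<Rightarrow> 'a::topological_space \<Rightarrow> 'b::real_normed_vector"
  assumes "equicont S F"
  shows "equicont S (\<lambda>T y. - F T y)"
  using assms unfolding equicont_def by (simp add: dist_minus)

lemma equicont_lip:
  fixes F :: "nat \<Rightarrow> 'a::topological_space \<Rightarrow> 'b::metric_space" and \<phi> :: "'b \<Rightarrow> 'c::metric_space"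
  assumes "equicont S F" and L: "L \<ge> 0" and lip: "\<And>a b. dist (\<phi> a) (\<phi> b) \<le> L * dist a b"
  shows "equicont S (\<lambda>T y. \<phi> (F T y))"
  unfolding equicont_def
proof (intro ballI allI impI)
  fix y e assume y: "y \<in> S" and e: "(e::real) > 0"
  have e': "e / (L + 1) > 0" using e L by auto
  obtain U where U: "open U" "y \<in> U" "\<forall>T. \<forall>z\<in>U \<inter> S. dist (F T y) (F T z) < e / (L + 1)"
    using assms(1) y e' unfolding equicont_def by meson
  show "\<exists>U. open U \<and> y \<in> U \<and> (\<forall>T. \<forall>z\<in>U \<inter> S. dist (\<phi> (F T y)) (\<phi> (F T z)) < e)"
  proof (intro exI conjI allI ballI)
    show "open U" "y \<in> U" using U by auto
    fix T z assume z: "z \<in> U \<inter> S"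
    have "dist (F T y) (F T z) < e / (L + 1)" using U(3) z by blast
    hence 1: "L * dist (F T y) (F T z) \<le> L * (e / (L + 1))" using L by (intro mult_left_mono) auto
    have 2: "L * (e / (L + 1)) < e" using e L by (simp add: field_simps)
    have "dist (\<phi> (F T y)) (\<phi> (F T z)) \<le> L * dist (F T y) (F T z)" by (rule lip)
    also note 1
    also note 2
    finally show "dist (\<phi> (F T y)) (\<phi> (F T z)) < e" .
  qed
qed

lemma equicont_const:
  fixes g :: "'a::metric_space \<Rightarrow> 'b::metric_space"
  assumes "continuous_on S g"
  shows "equicont S (\<lambda>T y. g y)"
  unfolding equicont_def
proof (intro ballI allI impI)
  fix y e assume y: "y \<in> S" and e: "(e::real) > 0"
  obtain d where d: "d > 0" "\<forall>x'\<in>S. dist x' y < d \<longrightarrow> dist (g x') (g y) < e"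
    using assms y e unfolding continuous_on_iff by meson
  show "\<exists>U. open U \<and> y \<in> U \<and> (\<forall>T. \<forall>z\<in>U \<inter> S. dist (g y) (g z) < e)"
    by (rule exI[of _ "ball y d"]) (use d in \<open>auto simp: dist_commute\<close>)
qed

lemma equicont_seq:
  "equicont S (\<lambda>T y. s T)"
  unfolding equicont_def by (intro ballI allI impI exI[of _ UNIV]) auto

lemma equicont_scaleR:
  fixes F :: "nat \<Rightarrow> 'a::topological_space \<Rightarrow> real" and G :: "nat \<Rightarrow> 'a \<Rightarrow> 'b::real_normed_vector"
  assumes "equicont S F" "equicont S G"
    and BF: "\<And>T y. y \<in> S \<Longrightarrow> \<bar>F T y\<bar> \<le> BF" and BG: "\<And>T y. y \<in> S \<Longrightarrow> norm (G T y) \<le> BG"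
  shows "equicont S (\<lambda>T y. F T y *\<^sub>R G T y)"
  unfolding equicont_def
proof (intro ballI allI impI)
  fix y e assume y: "y \<in> S" and e: "(e::real) > 0"
  have BF0: "BF \<ge> 0" using BF[OF y, of 0] by linarith
  have BG0: "BG \<ge> 0" using BG[OF y, of 0] norm_ge_zero order_trans by blast
  define e1 where "e1 = e / (2 * (BG + 1))"
  define e2 where "e2 = e / (2 * (BF + 1))"
  have e1: "e1 > 0" and e2: "e2 > 0" using e BF0 BG0 by (auto simp: e1_def e2_def)
  obtain U1 where U1: "open U1" "y \<in> U1" "\<forall>T. \<forall>z\<in>U1 \<inter> S. dist (F T y) (F T z) < e1"
    using assms(1) y e1 unfolding equicont_def by meson
  obtain U2 where U2: "open U2" "y \<in> U2" "\<forall>T. \<forall>z\<in>U2 \<inter> S. dist (G T y) (G T z) < e2"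
    using assms(2) y e2 unfolding equicont_def by meson
  show "\<exists>U. open U \<and> y \<in> U \<and> (\<forall>T. \<forall>z\<in>U \<inter> S. dist (F T y *\<^sub>R G T y) (F T z *\<^sub>R G T z) < e)"
  proof (intro exI conjI allI ballI)
    show "open (U1 \<inter> U2)" "y \<in> U1 \<inter> U2" using U1 U2 by auto
    fix T z assume z: "z \<in> U1 \<inter> U2 \<inter> S"
    have dF: "\<bar>F T y - F T z\<bar> < e1" using U1 z by (auto simp: dist_real_def)
    have dG: "norm (G T y - G T z) < e2" using U2 z by (auto simp: dist_norm)
    have "F T y *\<^sub>R G T y - F T z *\<^sub>R G T z = F T y *\<^sub>R (G T y - G T z) + (F T y - F T z) *\<^sub>R G T z"
      by (simp add: algebra_simps)
    hence "dist (F T y *\<^sub>R G T y) (F T z *\<^sub>R G T z) \<le> \<bar>F T y\<bar> * norm (G T y - G T z) + \<bar>F T y - F T z\<bar> * norm (G T z)"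
      by (metis dist_norm norm_scaleR norm_triangle_ineq)
    also have "\<dots> \<le> BF * e2 + e1 * BG"
      using BF[OF y, of T] BG[of z T] z dF dG BF0 BG0
      by (intro add_mono mult_mono) auto
    also have "BF * e2 < e / 2" using e BF0 by (simp add: e2_def field_simps)
    also have "e1 * BG < e / 2" using e BG0 by (simp add: e1_def field_simps)
    finally show "dist (F T y *\<^sub>R G T y) (F T z *\<^sub>R G T z) < e" by linarith
  qed
qed




lemma reg_add:
  fixes f g :: "'x::euclidean_space \<Rightarrow> real ^ 'd::finite \<Rightarrow> nat \<Rightarrow> real"
  assumes "regular X f" "regular X g"
  shows "regular X (\<lambda>x p T. f x p T + g x p T)"
proof -
  define S where "S = X \<times> (prob_simplex :: (real ^ 'd) set)"
  define F where "F = (\<lambda>T (x, p). f x p T)"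
  define G where "G = (\<lambda>T (x, p). g x p T)"
  obtain D1 where D1: "\<forall>T. \<forall>x\<in>X. \<forall>p\<in>prob_simplex.
           ((\<lambda>q. f x q T) has_derivative (\<lambda>h. D1 x p T \<bullet> h)) (at p within prob_simplex)"
     "unif_bounded S (\<lambda>T (x,p). D1 x p T)" "equicont S (\<lambda>T (x,p). D1 x p T)"
    and F: "unif_bounded S F" "equicont S F"
    using assms(1) unfolding regular_def S_def F_def by blast
  obtain D2 where D2: "\<forall>T. \<forall>x\<in>X. \<forall>p\<in>prob_simplex.
           ((\<lambda>q. g x q T) has_derivative (\<lambda>h. D2 x p T \<bullet> h)) (at p within prob_simplex)"
     "unif_bounded S (\<lambda>T (x,p). D2 x p T)" "equicont S (\<lambda>T (x,p). D2 x p T)"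
    and G: "unif_bounded S G" "equicont S G"
    using assms(2) unfolding regular_def S_def G_def by blast
  have e1: "(\<lambda>T (x,p). f x p T + g x p T) = (\<lambda>T y. F T y + G T y)"
    by (simp add: F_def G_def fun_eq_iff split_beta)
  have e2: "(\<lambda>T (x,p). D1 x p T + D2 x p T) = (\<lambda>T y. (\<lambda>T (x,p). D1 x p T) T y + (\<lambda>T (x,p). D2 x p T) T y)"
    by (simp add: fun_eq_iff split_beta)
  have ub: "unif_bounded S (\<lambda>T y. A T y + B T y)" if hAB: "unif_bounded S A" "unif_bounded S B"
    for A B :: "nat \<Rightarrow> _ \<Rightarrow> 'z::real_normed_vector"
  proof -
    obtain BA BB where "\<forall>T. \<forall>y\<in>S. norm (A T y) \<le> BA" "\<forall>T. \<forall>y\<in>S. norm (B T y) \<le> BB"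
      using hAB unfolding unif_bounded_def by blast
    thus ?thesis unfolding unif_bounded_def
      by (intro exI[of _ "BA + BB"]) (meson add_mono norm_triangle_ineq order_trans)
  qed
  show ?thesis unfolding regular_def S_def[symmetric]
  proof (intro conjI exI[of _ "\<lambda>x p T. D1 x p T + D2 x p T"])
    show "unif_bounded S (\<lambda>T (x,p). f x p T + g x p T)" unfolding e1 by (rule ub[OF F(1) G(1)])
    show "equicont S (\<lambda>T (x,p). f x p T + g x p T)" unfolding e1 by (rule equicont_add[OF F(2) G(2)])
    show "unif_bounded S (\<lambda>T (x,p). D1 x p T + D2 x p T)" unfolding e2 by (rule ub[OF D1(2) D2(2)])
    show "equicont S (\<lambda>T (x,p). D1 x p T + D2 x p T)" unfolding e2 by (rule equicont_add[OF D1(3) D2(3)])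
    show "\<forall>T. \<forall>x\<in>X. \<forall>p\<in>prob_simplex. ((\<lambda>q. f x q T + g x q T) has_derivative
            (\<lambda>h. (D1 x p T + D2 x p T) \<bullet> h)) (at p within prob_simplex)"
      using D1(1) D2(1) by (auto simp: inner_add_left intro!: has_derivative_add)
  qed
qed

lemma reg_uminus:
  fixes f :: "'x::euclidean_space \<Rightarrow> real ^ 'd::finite \<Rightarrow> nat \<Rightarrow> real"
  assumes "regular X f"
  shows "regular X (\<lambda>x p T. - f x p T)"
proof -
  define S where "S = X \<times> (prob_simplex :: (real ^ 'd) set)"
  define F where "F = (\<lambda>T (x, p). f x p T)"
  obtain D1 where D1: "\<forall>T. \<forall>x\<in>X. \<forall>p\<in>prob_simplex.
           ((\<lambda>q. f x q T) has_derivative (\<lambda>h. D1 x p T \<bullet> h)) (at p within prob_simplex)"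
     "unif_bounded S (\<lambda>T (x,p). D1 x p T)" "equicont S (\<lambda>T (x,p). D1 x p T)"
    and F: "unif_bounded S F" "equicont S F"
    using assms(1) unfolding regular_def S_def F_def by blast
  have e1: "(\<lambda>T (x,p). - f x p T) = (\<lambda>T y. - F T y)"
    by (simp add: F_def fun_eq_iff split_beta)
  have e2: "(\<lambda>T (x,p). - D1 x p T) = (\<lambda>T y. - (\<lambda>T (x,p). D1 x p T) T y)"
    by (simp add: fun_eq_iff split_beta)
  have ub: "unif_bounded S (\<lambda>T y. - A T y)" if "unif_bounded S A"
    for A :: "nat \<Rightarrow> _ \<Rightarrow> 'z::real_normed_vector"
    using that unfolding unif_bounded_def by simp
  show ?thesis unfolding regular_def S_def[symmetric]
  proof (intro conjI exI[of _ "\<lambda>x p T. - D1 x p T"])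
    show "unif_bounded S (\<lambda>T (x,p). - f x p T)" unfolding e1 by (rule ub[OF F(1)])
    show "equicont S (\<lambda>T (x,p). - f x p T)" unfolding e1 by (rule equicont_uminus[OF F(2)])
    show "unif_bounded S (\<lambda>T (x,p). - D1 x p T)" unfolding e2 by (rule ub[OF D1(2)])
    show "equicont S (\<lambda>T (x,p). - D1 x p T)" unfolding e2 by (rule equicont_uminus[OF D1(3)])
    show "\<forall>T. \<forall>x\<in>X. \<forall>p\<in>prob_simplex. ((\<lambda>q. - f x q T) has_derivative
            (\<lambda>h. (- D1 x p T) \<bullet> h)) (at p within prob_simplex)"
      using D1(1) by (auto simp: inner_minus_left intro!: has_derivative_minus)
  qed
qed

lemma reg_comp:
  fixes f :: "'x::euclidean_space \<Rightarrow> real ^ 'd::finite \<Rightarrow> nat \<Rightarrow> real"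
    and \<psi> \<psi>' :: "real \<Rightarrow> real"
  assumes "regular X f"
    and deriv: "\<And>s. (\<psi> has_real_derivative \<psi>' s) (at s)"
    and bnd: "\<And>s. \<bar>\<psi> s\<bar> \<le> \<bar>s\<bar>"
    and lip: "\<And>a b. \<bar>\<psi> a - \<psi> b\<bar> \<le> \<bar>a - b\<bar>"
    and d1: "\<And>s. \<bar>\<psi>' s\<bar> \<le> 1"
    and dlip: "\<And>a b. \<bar>\<psi>' a - \<psi>' b\<bar> \<le> L * \<bar>a - b\<bar>" and L: "L \<ge> 0"
  shows "regular X (\<lambda>x p T. \<psi> (f x p T))"
proof -
  define S where "S = X \<times> (prob_simplex :: (real ^ 'd) set)"
  define F where "F = (\<lambda>T (x, p). f x p T)"
  obtain D1 where D1: "\<forall>T. \<forall>x\<in>X. \<forall>p\<in>prob_simplex.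
           ((\<lambda>q. f x q T) has_derivative (\<lambda>h. D1 x p T \<bullet> h)) (at p within prob_simplex)"
     "unif_bounded S (\<lambda>T (x,p). D1 x p T)" "equicont S (\<lambda>T (x,p). D1 x p T)"
    and F: "unif_bounded S F" "equicont S F"
    using assms(1) unfolding regular_def S_def F_def by blast
  define DD where "DD = (\<lambda>T (x,p). D1 x p T)"
  obtain BD where BD: "\<And>T y. y \<in> S \<Longrightarrow> norm (DD T y) \<le> BD"
    using D1(2) unfolding unif_bounded_def DD_def by blast
  have e1: "(\<lambda>T (x,p). \<psi> (f x p T)) = (\<lambda>T y. \<psi> (F T y))"
    by (simp add: F_def fun_eq_iff split_beta)
  have e2: "(\<lambda>T (x,p). \<psi>' (f x p T) *\<^sub>R D1 x p T) = (\<lambda>T y. (\<lambda>T y. \<psi>' (F T y)) T y *\<^sub>R DD T y)"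
    by (simp add: F_def DD_def fun_eq_iff split_beta)
  show ?thesis unfolding regular_def S_def[symmetric]
  proof (intro conjI exI[of _ "\<lambda>x p T. \<psi>' (f x p T) *\<^sub>R D1 x p T"])
    show "unif_bounded S (\<lambda>T (x,p). \<psi> (f x p T))" unfolding e1
      using F(1) unfolding unif_bounded_def
      by (metis bnd order_trans real_norm_def)
    show "equicont S (\<lambda>T (x,p). \<psi> (f x p T))" unfolding e1
      by (rule equicont_lip[OF F(2), of 1]) (auto simp: dist_real_def lip)
    have eq': "equicont S (\<lambda>T y. \<psi>' (F T y))"
      by (rule equicont_lip[OF F(2) L]) (auto simp: dist_real_def dlip)
    show "equicont S (\<lambda>T (x,p). \<psi>' (f x p T) *\<^sub>R D1 x p T)" unfolding e2
      by (rule equicont_scaleR[OF eq' D1(3)[folded DD_def], of 1 BD]) (auto simp: d1 BD)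
    show "unif_bounded S (\<lambda>T (x,p). \<psi>' (f x p T) *\<^sub>R D1 x p T)" unfolding e2 unif_bounded_def
    proof (intro exI[of _ BD] allI ballI)
      fix T y assume "y \<in> S"
      have "norm (\<psi>' (F T y) *\<^sub>R DD T y) = \<bar>\<psi>' (F T y)\<bar> * norm (DD T y)" by simp
      also have "\<dots> \<le> 1 * BD" using BD[OF \<open>y \<in> S\<close>, of T] d1[of "F T y"]
        by (intro mult_mono) auto
      finally show "norm (\<psi>' (F T y) *\<^sub>R DD T y) \<le> BD" by simp
    qed
    show "\<forall>T. \<forall>x\<in>X. \<forall>p\<in>prob_simplex. ((\<lambda>q. \<psi> (f x q T)) has_derivative
            (\<lambda>h. (\<psi>' (f x p T) *\<^sub>R D1 x p T) \<bullet> h)) (at p within prob_simplex)"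
    proof (intro allI ballI)
      fix T x p assume "x \<in> X" "p \<in> (prob_simplex :: (real ^ 'd) set)"
      hence h1: "((\<lambda>q. f x q T) has_derivative (\<lambda>h. D1 x p T \<bullet> h)) (at p within prob_simplex)"
        using D1(1) by blast
      have h2: "(\<psi> has_derivative (*) (\<psi>' (f x p T))) (at (f x p T))"
        by (rule has_field_derivative_imp_has_derivative[OF deriv])
      have "((\<lambda>q. \<psi> (f x q T)) has_derivative (\<lambda>h. \<psi>' (f x p T) * (D1 x p T \<bullet> h))) (at p within prob_simplex)"
        using has_derivative_compose[OF h1 h2] by simp
      thus "((\<lambda>q. \<psi> (f x q T)) has_derivative
            (\<lambda>h. (\<psi>' (f x p T) *\<^sub>R D1 x p T) \<bullet> h)) (at p within prob_simplex)"
        by (simp add: inner_scaleR_left)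
    qed
  qed
qed




lemma cost_inner: "cost l x q = (\<chi> i. l x i) \<bullet> q"
  by (simp add: cost_def inner_vec_def)

lemma cost_bound:
  assumes "p \<in> prob_simplex" "\<And>i. \<bar>l x i\<bar> \<le> B"
  shows "\<bar>cost l x p\<bar> \<le> B"
proof -
  have pn: "\<And>i. 0 \<le> p $ i" and ps: "(\<Sum>i\<in>UNIV. p $ i) = 1" using assms(1) by (auto simp: prob_simplex_def)
  have "\<bar>cost l x p\<bar> \<le> (\<Sum>i\<in>UNIV. \<bar>l x i * p $ i\<bar>)" unfolding cost_def by (rule sum_abs)
  also have "\<dots> \<le> (\<Sum>i\<in>UNIV. B * p $ i)"
    using assms(2) pn by (intro sum_mono) (simp add: abs_mult mult_right_mono)
  also have "\<dots> = B" using ps by (simp add: sum_distrib_left[symmetric])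
  finally show ?thesis .
qed

lemma cost_cont:
  fixes l :: "'x::euclidean_space \<Rightarrow> 'd::finite \<Rightarrow> real"
  assumes l_cont: "\<And>i. continuous_on X (\<lambda>x. l x i)"
  shows "continuous_on (X \<times> (P :: (real^'d) set)) (\<lambda>(x,p). cost l x p)"
    and "continuous_on (X \<times> (P :: (real^'d) set)) (\<lambda>(x,p). (\<chi> i. l x i))"
proof -
  have c: "continuous_on (X \<times> P) (\<lambda>y. l (fst y) i)" for i
    by (rule continuous_on_compose2[OF l_cont continuous_on_fst]) (auto intro: continuous_on_id)
  have "continuous_on (X \<times> P) (\<lambda>y. \<Sum>i\<in>UNIV. l (fst y) i * snd y $ i)"
    by (intro continuous_on_sum continuous_on_mult c continuous_on_component continuous_on_snd continuous_on_id)
  thus "continuous_on (X \<times> P) (\<lambda>(x,p). cost l x p)" by (simp add: cost_def split_beta)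
  have "continuous_on (X \<times> P) (\<lambda>y. \<chi> i. l (fst y) i)"
    by (intro continuous_on_vec_lambda c)
  thus "continuous_on (X \<times> P) (\<lambda>(x,p). (\<chi> i. l x i))" by (simp add: split_beta)
qed

lemma reg_cost:
  fixes l :: "'x::euclidean_space \<Rightarrow> 'd::finite \<Rightarrow> real" and s :: "nat \<Rightarrow> real"
  assumes l_cont: "\<And>i. continuous_on X (\<lambda>x. l x i)" and lB: "\<And>x i. x \<in> X \<Longrightarrow> \<bar>l x i\<bar> \<le> B"
    and sB: "\<And>T. \<bar>s T\<bar> \<le> Bs"
  shows "regular X (\<lambda>x p T. cost l x p + s T)"
proof -
  define S where "S = X \<times> (prob_simplex :: (real ^ 'd) set)"
  define Fc where "Fc = (\<lambda>(x,p). cost l x (p :: real ^ 'd))"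
  define Fd where "Fd = (\<lambda>(x::'x,p::real^'d). (\<chi> i. l x i))"
  have e1: "(\<lambda>T (x,p). cost l x p + s T) = (\<lambda>T y. Fc y + s T)"
    by (simp add: Fc_def fun_eq_iff split_beta)
  have e2: "(\<lambda>T (x,p). (\<chi> i. l x i)) = (\<lambda>T y. Fd y)"
    by (simp add: Fd_def fun_eq_iff split_beta)
  show ?thesis unfolding regular_def S_def[symmetric]
  proof (intro conjI exI[of _ "\<lambda>x p T. (\<chi> i. l x i)"])
    show "unif_bounded S (\<lambda>T (x,p). cost l x p + s T)" unfolding unif_bounded_def
    proof (intro exI[of _ "B + Bs"] allI ballI)
      fix T y assume "y \<in> S"
      then obtain x p where y: "y = (x,p)" "x \<in> X" "p \<in> prob_simplex" by (auto simp: S_def)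
      have cB: "\<bar>cost l x p\<bar> \<le> B" by (rule cost_bound[of p l x B, OF y(3) lB[OF y(2)]])
      have "\<bar>cost l x p + s T\<bar> \<le> B + Bs"
        using abs_triangle_ineq[of "cost l x p" "s T"] sB[of T] cB by linarith
      thus "norm ((\<lambda>T (x,p). cost l x p + s T) T y) \<le> B + Bs" unfolding y(1) by simp
    qed
    have c1: "continuous_on S Fc" unfolding S_def Fc_def by (rule cost_cont(1)[OF l_cont])
    have c2: "continuous_on S Fd" unfolding S_def Fd_def by (rule cost_cont(2)[OF l_cont])
    show "equicont S (\<lambda>T (x,p). cost l x p + s T)" unfolding e1
      by (rule equicont_add[OF equicont_const[OF c1] equicont_seq[of S s]])
    show "equicont S (\<lambda>T (x,p). (\<chi> i. l x i))" unfolding e2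
      by (rule equicont_const[OF c2])
    show "unif_bounded S (\<lambda>T (x,p). (\<chi> i. l x i))" unfolding unif_bounded_def
    proof (intro exI[of _ "real CARD('d) * B"] allI ballI)
      fix T y assume "y \<in> S"
      then obtain x p where y: "y = (x,p)" "x \<in> X" by (auto simp: S_def)
      have "norm (\<chi> i. l x i) \<le> (\<Sum>i\<in>UNIV. \<bar>(\<chi> i. l x i) $ i\<bar>)" by (rule norm_le_l1_cart)
      also have "\<dots> \<le> (\<Sum>i\<in>(UNIV::'d set). B)" using lB[OF y(2)] by (intro sum_mono) simp
      finally show "norm ((\<lambda>T (x,p). (\<chi> i. l x i)) T y) \<le> real CARD('d) * B" using y by simp
    qed
    show "\<forall>T. \<forall>x\<in>X. \<forall>p\<in>prob_simplex. ((\<lambda>q. cost l x q + s T) has_derivative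
            (\<lambda>h. (\<chi> i. l x i) \<bullet> h)) (at p within prob_simplex)"
      unfolding cost_inner
      by (intro allI ballI has_derivative_add_const bounded_linear_imp_has_derivative bounded_linear_inner_right)
  qed
qed

lemma sqmax_deriv0: "((\<lambda>s::real. (max 0 s)^2) has_real_derivative 2 * max 0 0) (at 0)"
proof -
  have "((\<lambda>y. ((max 0 y)^2 - (max 0 0)^2) / (y - 0)) \<longlongrightarrow> (0::real)) (at 0)"
  proof (rule Lim_null_comparison)
    show "\<forall>\<^sub>F y in at 0. norm (((max 0 y)^2 - (max 0 0)^2) / (y - 0)) \<le> \<bar>y\<bar>"
    proof (intro always_eventually allI)
      fix y :: real
      show "norm (((max 0 y)^2 - (max 0 0)^2) / (y - 0)) \<le> \<bar>y\<bar>"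
      proof (cases "y \<le> 0")
        case True thus ?thesis by (simp add: max_absorb1)
      next
        case False thus ?thesis by (simp add: max_absorb2 power2_eq_square)
      qed
    qed
    show "((\<lambda>y. \<bar>y\<bar>) \<longlongrightarrow> (0::real)) (at 0)"
      using tendsto_rabs[OF tendsto_ident_at[of "0::real" UNIV]] by simp
  qed
  thus ?thesis unfolding has_field_derivative_iff by simp
qed

lemma sqmax_deriv: "((\<lambda>s::real. (max 0 s)^2) has_real_derivative 2 * max 0 t) (at t)"
proof (cases t "0::real" rule: linorder_cases)
  case less
  have "((\<lambda>s::real. 0) has_real_derivative 0) (at t)" by simp
  hence "((\<lambda>s::real. 0) has_real_derivative 2 * max 0 t) (at t)" using less by simp
  thus ?thesis
    by (rule has_field_derivative_transform_within_open[where S="{..<0}"]) (use less in auto)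
next
  case greater
  have "((\<lambda>s::real. s^2) has_real_derivative 2 * t) (at t)"
    by (auto intro!: derivative_eq_intros)
  hence "((\<lambda>s::real. s^2) has_real_derivative 2 * max 0 t) (at t)" using greater by simp
  thus ?thesis
    by (rule has_field_derivative_transform_within_open[where S="{0<..}"]) (use greater in auto)
next
  case equal
  thus ?thesis using sqmax_deriv0 by simp
qed




definition psi :: "real \<Rightarrow> real \<Rightarrow> real" where
  "psi \<delta> s = ((max 0 s)^2 - (max 0 (s - \<delta>))^2) / (2 * \<delta>)"
definition psi' :: "real \<Rightarrow> real \<Rightarrow> real" where
  "psi' \<delta> s = (max 0 s - max 0 (s - \<delta>)) / \<delta>"

lemma psi_deriv: assumes "\<delta> > 0" shows "(psi \<delta> has_real_derivative psi' \<delta> s) (at s)"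
proof -
  have h2: "((\<lambda>s. (max 0 (s - \<delta>))^2) has_real_derivative 2 * max 0 (s - \<delta>) * 1) (at s)"
    by (rule DERIV_chain2[OF sqmax_deriv, where g="\<lambda>s. s - \<delta>"]) (auto intro!: derivative_eq_intros)
  have "((\<lambda>s. ((max 0 s)^2 - (max 0 (s - \<delta>))^2) / (2 * \<delta>)) has_real_derivative
          (2 * max 0 s - 2 * max 0 (s - \<delta>) * 1) / (2 * \<delta>)) (at s)"
    by (intro DERIV_cdivide DERIV_diff sqmax_deriv h2)
  moreover have "(2 * max 0 s - 2 * max 0 (s - \<delta>) * 1) / (2 * \<delta>) = psi' \<delta> s"
    using assms by (simp add: psi'_def field_simps)
  ultimately show ?thesis by (simp add: psi_def[abs_def])
qed

lemma psi_zero: "\<delta> > 0 \<Longrightarrow> s \<le> 0 \<Longrightarrow> psi \<delta> s = 0"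
  by (simp add: psi_def max_absorb1)

lemma psi_big: "\<delta> > 0 \<Longrightarrow> s \<ge> \<delta> \<Longrightarrow> psi \<delta> s = s - \<delta>/2"
  by (simp add: psi_def max_def field_simps power2_eq_square)

lemma psi_range: assumes "\<delta> > 0" shows "0 \<le> psi \<delta> s" "psi \<delta> s \<le> max 0 s"
proof -
  consider "s \<le> 0" | "0 < s" "s < \<delta>" | "\<delta> \<le> s" by linarith
  hence "0 \<le> psi \<delta> s \<and> psi \<delta> s \<le> max 0 s"
  proof cases
    case 1 thus ?thesis using assms by (simp add: psi_zero max_absorb1)
  next
    case 2
    hence "psi \<delta> s = s^2 / (2 * \<delta>)" by (simp add: psi_def max_def)
    moreover have "s^2 \<le> s * (2 * \<delta>)" using 2 by (simp add: power2_eq_square)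
    ultimately show ?thesis using 2 assms by (simp add: divide_le_eq)
  next
    case 3 thus ?thesis using assms by (simp add: psi_big)
  qed
  thus "0 \<le> psi \<delta> s" "psi \<delta> s \<le> max 0 s" by auto
qed

lemma psi'_range: assumes "\<delta> > 0" shows "\<bar>psi' \<delta> s\<bar> \<le> 1"
proof -
  have "0 \<le> max 0 s - max 0 (s - \<delta>)" "max 0 s - max 0 (s - \<delta>) \<le> \<delta>"
    using assms by (simp_all add: max_def)
  thus ?thesis using assms by (simp add: psi'_def abs_le_iff divide_le_eq)
qed

lemma psi'_lip: assumes "\<delta> > 0" shows "\<bar>psi' \<delta> a - psi' \<delta> b\<bar> \<le> (2 / \<delta>) * \<bar>a - b\<bar>"
proof -
  have "psi' \<delta> a - psi' \<delta> b = ((max 0 a - max 0 b) - (max 0 (a - \<delta>) - max 0 (b - \<delta>))) / \<delta>"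
    by (simp add: psi'_def diff_divide_distrib)
  moreover have "\<bar>(max 0 a - max 0 b) - (max 0 (a - \<delta>) - max 0 (b - \<delta>))\<bar> \<le> 2 * \<bar>a - b\<bar>"
  proof -
    have m: "\<bar>max 0 u - max 0 v\<bar> \<le> \<bar>u - v\<bar>" for u v :: real
      unfolding max_def by (auto simp: abs_if)
    show ?thesis using m[of a b] m[of "a - \<delta>" "b - \<delta>"] by (simp add: abs_le_iff)
  qed
  ultimately have "\<bar>psi' \<delta> a - psi' \<delta> b\<bar> \<le> (2 * \<bar>a - b\<bar>) / \<delta>"
    using assms by (simp add: abs_divide divide_right_mono)
  thus ?thesis by simp
qed

lemma psi_lip: assumes "\<delta> > 0" shows "\<bar>psi \<delta> a - psi \<delta> b\<bar> \<le> \<bar>a - b\<bar>"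
proof -
  have *: "\<bar>psi \<delta> b - psi \<delta> a\<bar> \<le> \<bar>b - a\<bar>" if ab: "a < b" for a b
  proof -
    obtain z where "psi \<delta> b - psi \<delta> a = (b - a) * psi' \<delta> z"
      using MVT2[OF ab, of "psi \<delta>" "psi' \<delta>"] psi_deriv[OF assms] by blast
    hence "\<bar>psi \<delta> b - psi \<delta> a\<bar> = \<bar>b - a\<bar> * \<bar>psi' \<delta> z\<bar>" by (simp add: abs_mult)
    also have "\<dots> \<le> \<bar>b - a\<bar> * 1" using psi'_range[OF assms] by (intro mult_left_mono) auto
    finally show ?thesis by simp
  qed
  show ?thesis
    by (cases a b rule: linorder_cases) (use *[of a b] *[of b a] in \<open>auto simp: abs_minus_commute\<close>)
qed

lemma psi_abs: assumes "\<delta> > 0" shows "\<bar>psi \<delta> s\<bar> \<le> \<bar>s\<bar>"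
  using psi_range[OF assms, of s] by auto

lemma reg_psi:
  fixes f :: "'x::euclidean_space \<Rightarrow> real ^ 'd::finite \<Rightarrow> nat \<Rightarrow> real"
  assumes "regular X f" "\<delta> > 0"
  shows "regular X (\<lambda>x p T. psi \<delta> (f x p T))"
  by (rule reg_comp[OF assms(1) psi_deriv[OF assms(2)] psi_abs[OF assms(2)] psi_lip[OF assms(2)]
        psi'_range[OF assms(2)] psi'_lip[OF assms(2)]]) (use assms(2) in simp)




lemma prob_mono:
  assumes P: "P \<in> prob_simplex" and imp: "\<And>\<omega>. E \<omega> \<Longrightarrow> E1 \<omega> \<or> E2 \<omega>"
  shows "prob_iid P T E \<le> prob_iid P T E1 + prob_iid P T E2"
proof -
  have Pnn: "\<And>i. 0 \<le> P $ i" using P by (auto simp: prob_simplex_def)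
  define A where "A = PiE {..<T} (\<lambda>_. UNIV :: 'a set)"
  have finA: "finite A" unfolding A_def by (intro finite_PiE) auto
  define f where "f = (\<lambda>\<omega>. \<Prod>t<T. P $ (\<omega> t))"
  have fnn: "\<And>\<omega>. 0 \<le> f \<omega>" unfolding f_def using Pnn by (simp add: prod_nonneg)
  have "prob_iid P T E = sum f {\<omega>\<in>A. E \<omega>}" by (simp add: prob_iid_def A_def f_def)
  also have "\<dots> \<le> sum f ({\<omega>\<in>A. E1 \<omega>} \<union> {\<omega>\<in>A. E2 \<omega>})"
    by (rule sum_mono2) (use finA fnn imp in auto)
  also have "\<dots> \<le> sum f {\<omega>\<in>A. E1 \<omega>} + sum f {\<omega>\<in>A. E2 \<omega>}"
    using sum_Un[of "{\<omega>\<in>A. E1 \<omega>}" "{\<omega>\<in>A. E2 \<omega>}" f] finA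
      sum_nonneg[of "{\<omega>\<in>A. E1 \<omega>} \<inter> {\<omega>\<in>A. E2 \<omega>}" f] fnn by auto
  also have "\<dots> = prob_iid P T E1 + prob_iid P T E2" by (simp add: prob_iid_def A_def f_def)
  finally show ?thesis .
qed

lemma prob_false: "prob_iid P T (\<lambda>_. False) = 0"
  by (simp add: prob_iid_def)

lemma cost_empirical:
  assumes "T > 0"
  shows "cost l x (empirical \<omega> T) = (\<Sum>t<T. l x (\<omega> t)) / real T"
proof -
  have "(\<Sum>t<T. l x (\<omega> t)) = (\<Sum>t<T. \<Sum>i\<in>UNIV. if \<omega> t = i then l x i else 0)"
    by simp
  also have "\<dots> = (\<Sum>i\<in>UNIV. \<Sum>t<T. if \<omega> t = i then l x i else 0)" by (rule sum.swap)
  also have "\<dots> = (\<Sum>i\<in>UNIV. l x i * real (card {t\<in>{..<T}. \<omega> t = i}))"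
  proof (rule sum.cong[OF refl])
    fix i
    have "(\<Sum>t\<in>{t\<in>{..<T}. \<omega> t = i}. l x i) = (\<Sum>t<T. if \<omega> t = i then l x i else 0)"
      by (rule sum.inter_filter) simp
    hence "(\<Sum>t<T. if \<omega> t = i then l x i else 0) = (\<Sum>t\<in>{t\<in>{..<T}. \<omega> t = i}. l x i)" by simp
    thus "(\<Sum>t<T. if \<omega> t = i then l x i else 0) = l x i * real (card {t\<in>{..<T}. \<omega> t = i})"
      by simp
  qed
  finally show ?thesis
    by (simp add: cost_def empirical_def sum_divide_distrib)
qed

lemma conc2:
  fixes l :: "'x \<Rightarrow> 'd::finite \<Rightarrow> real"
  assumes P: "P \<in> prob_simplex" and lB: "\<And>i. \<bar>l x i\<bar> \<le> B" and B: "B > 0"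
    and T: "T > 0" and a0: "a \<ge> 0" and aT: "a / real T \<le> 1/2"
  shows "prob_iid P T (\<lambda>\<omega>. cost l x P > cost l x (empirical \<omega> T) + 2 * B * sqrt (8 * (a / real T)))
          \<le> exp (- 2 * a)"
proof -
  define c where "c = cost l x P"
  define R where "R = 2 * B"
  define r where "r = R * sqrt (8 * (a / real T))"
  define w where "w = (\<lambda>i. c - l x i)"
  define lam where "lam = r / (2 * R^2)"
  have R: "R > 0" using B by (simp add: R_def)
  have Tp: "real T > 0" using T by simp
  have Pnn: "\<And>i. 0 \<le> P $ i" and Psum: "(\<Sum>i\<in>UNIV. P $ i) = 1" using P by (auto simp: prob_simplex_def)
  have cB: "\<bar>c\<bar> \<le> B" unfolding c_def by (rule cost_bound[of P l x B, OF P lB])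
  have wR: "\<bar>w i\<bar> \<le> R" for i using cB lB[of i] by (simp add: w_def R_def abs_le_iff)
  have mean: "(\<Sum>i\<in>UNIV. P $ i * w i) = 0"
  proof -
    have "(\<Sum>i\<in>UNIV. P $ i * w i) = c * (\<Sum>i\<in>UNIV. P $ i) - (\<Sum>i\<in>UNIV. l x i * P $ i)"
      by (simp add: w_def algebra_simps sum_subtractf sum_distrib_left)
    thus ?thesis using Psum by (simp add: c_def cost_def)
  qed
  have r0: "r \<ge> 0" using R a0 Tp by (simp add: r_def)
  have r2: "r^2 = R^2 * (8 * (a / real T))"
    using a0 Tp by (simp add: r_def power_mult_distrib)
  have lam0: "0 \<le> lam" using r0 R by (simp add: lam_def)
  have lamR: "lam * R \<le> 1"
  proof -
    have "sqrt (8 * (a / real T)) \<le> sqrt 4" using aT by (intro real_sqrt_le_mono) linarith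
    hence "sqrt (8 * (a / real T)) \<le> 2" by simp
    hence "r \<le> 2 * R" using R by (simp add: r_def mult.commute mult_left_mono)
    thus ?thesis using R by (simp add: lam_def power2_eq_square field_simps)
  qed
  have ev: "(c > cost l x (empirical \<omega> T) + r) \<longleftrightarrow> (\<Sum>t<T. w (\<omega> t)) > real T * r" for \<omega>
  proof -
    have "(\<Sum>t<T. w (\<omega> t)) = real T * c - (\<Sum>t<T. l x (\<omega> t))"
      by (simp add: w_def sum_subtractf)
    moreover have "cost l x (empirical \<omega> T) = (\<Sum>t<T. l x (\<omega> t)) / real T"
      by (rule cost_empirical[OF T])
    ultimately have sw: "(\<Sum>t<T. w (\<omega> t)) = real T * c - real T * cost l x (empirical \<omega> T)"
      using Tp by (simp add: field_simps)
    have "(c > cost l x (empirical \<omega> T) + r) \<longleftrightarrow> real T * (cost l x (empirical \<omega> T) + r) < real T * c"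
      using mult_less_cancel_left_pos[OF Tp] by simp
    thus ?thesis unfolding sw by (simp add: algebra_simps)
  qed
  have "prob_iid P T (\<lambda>\<omega>. c > cost l x (empirical \<omega> T) + r)
        = prob_iid P T (\<lambda>\<omega>. (\<Sum>t<T. w (\<omega> t)) > real T * r)"
    by (simp only: ev)
  also have "\<dots> \<le> exp (- lam * (real T * r) + real T * (lam^2 * R^2))"
    by (rule conc[OF P mean wR lam0 lamR])
  also have "- lam * (real T * r) + real T * (lam^2 * R^2) = - 2 * a"
  proof -
    have "- lam * (real T * r) + real T * (lam^2 * R^2) = - real T * r^2 / (4 * R^2)"
      using R by (simp add: lam_def power2_eq_square field_simps)
    also have "\<dots> = - 2 * a" using r2 R Tp by (simp add: field_simps)
    finally show ?thesis .
  qed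
  finally show ?thesis by (simp add: c_def r_def R_def)
qed




lemma low_le:
  assumes d: "\<delta> > 0"
  shows "err_ratio (u + psi \<delta> (c + - (2*\<delta>) + - u) - c) (u - c) \<le> 1"
proof (cases "u \<ge> c")
  case True
  hence "psi \<delta> (c + - (2*\<delta>) + - u) = 0" using d by (intro psi_zero) auto
  thus ?thesis by (intro err_ratio_le1) auto
next
  case False
  define s where "s = c + - (2*\<delta>) + - u"
  have "0 \<le> psi \<delta> s" "psi \<delta> s \<le> max 0 s" using psi_range[OF d] by auto
  hence "u + psi \<delta> s - c \<le> 0" "u + psi \<delta> s - c \<ge> u - c" using False d
    by (auto simp: s_def max_def split: if_splits)
  thus ?thesis using False by (intro err_ratio_le1) (auto simp: s_def)
qed

lemma low_strict:
  assumes d: "\<delta> > 0" and h: "u - c \<le> - (4*\<delta>)"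
  shows "err_ratio (u + psi \<delta> (c + - (2*\<delta>) + - u) - c) (u - c) \<le> ereal (5/8)"
proof -
  have "psi \<delta> (c + - (2*\<delta>) + - u) = (c + - (2*\<delta>) + - u) - \<delta>/2"
    using h d by (intro psi_big) auto
  hence e: "u + psi \<delta> (c + - (2*\<delta>) + - u) - c = - (5/2 * \<delta>)" by simp
  show ?thesis unfolding e using h d by (intro err_ratio_lek) auto
qed

lemma up_le:
  assumes d: "\<delta> > 0" and r: "r \<ge> 0"
  shows "err_ratio (u + - psi \<delta> (u + - (c + r)) - c) (u - c) \<le> 1"
proof (cases "u \<le> c")
  case True
  hence "psi \<delta> (u + - (c + r)) = 0" using d r by (intro psi_zero) auto
  thus ?thesis by (intro err_ratio_le1) auto
next
  case False
  define s where "s = u + - (c + r)"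
  have "0 \<le> psi \<delta> s" "psi \<delta> s \<le> max 0 s" using psi_range[OF d] by auto
  hence "u + - psi \<delta> s - c \<ge> 0" "u + - psi \<delta> s - c \<le> u - c" using False d r
    by (auto simp: s_def max_def split: if_splits)
  thus ?thesis using False by (intro err_ratio_le1) (auto simp: s_def)
qed

lemma up_strict:
  assumes d: "\<delta> > 0" and r: "r \<ge> 0" "r \<le> \<delta>" and h: "u - c \<ge> 4*\<delta>"
  shows "err_ratio (u + - psi \<delta> (u + - (c + r)) - c) (u - c) \<le> ereal (5/8)"
proof -
  have "psi \<delta> (u + - (c + r)) = (u + - (c + r)) - \<delta>/2"
    using h d r by (intro psi_big) auto
  hence e: "u + - psi \<delta> (u + - (c + r)) - c = r + \<delta>/2" by simp
  show ?thesis unfolding e using h d r by (intro err_ratio_lek) auto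
qed

lemma up_min:
  assumes d: "\<delta> > 0" and h: "cc > u + - psi \<delta> (u + - v)"
  shows "cc > u \<or> cc > v"
proof -
  have "psi \<delta> (u + - v) \<le> max 0 (u + - v)" using psi_range[OF d] by auto
  thus ?thesis using h by (auto simp: max_def split: if_splits)
qed

lemma low_ge: "\<delta> > 0 \<Longrightarrow> u \<le> u + psi \<delta> s"
  using psi_range by auto

lemma simplex_int_sub: "P \<in> prob_simplex_int \<Longrightarrow> P \<in> prob_simplex"
  by (auto simp: prob_simplex_int_def prob_simplex_def less_imp_le)




lemma interior_point:
  fixes P0 :: "real ^ 'd::finite"
  assumes P0: "P0 \<in> prob_simplex" and rho: "\<rho> > 0"
  shows "\<exists>P1\<in>prob_simplex_int. norm (P1 - P0) < \<rho>"
proof -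
  define u :: "real ^ 'd" where "u = (\<chi> i. 1 / real CARD('d))"
  define t where "t = min (1/2) (\<rho> / (2 * (norm (u - P0) + 1)))"
  have "2 * (norm (u - P0) + 1) > 0" by (smt (verit) norm_ge_zero)
  hence "\<rho> / (2 * (norm (u - P0) + 1)) > 0" using rho by simp
  hence t0: "t > 0" unfolding t_def by simp
  have t1: "t \<le> 1/2" unfolding t_def by (rule min.cobounded1)
  note t = t0 t1

  define P1 where "P1 = P0 + t *\<^sub>R (u - P0)"
  have Pnn: "\<And>i. 0 \<le> P0 $ i" and Psum: "(\<Sum>i\<in>UNIV. P0 $ i) = 1" using P0 by (auto simp: prob_simplex_def)
  have "P1 $ i > 0" for i
  proof -
    have "P1 $ i = (1 - t) * P0 $ i + t * (1 / real CARD('d))"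
      by (simp add: P1_def u_def algebra_simps)
    moreover have "(1 - t) * P0 $ i \<ge> 0" using t Pnn[of i] by simp
    moreover have "t * (1 / real CARD('d)) > 0" using t by simp
    ultimately show ?thesis by linarith
  qed
  moreover have "(\<Sum>i\<in>UNIV. P1 $ i) = 1"
  proof -
    have su: "(\<Sum>i\<in>UNIV. u $ i) = 1" by (simp add: u_def)
    have "(\<Sum>i\<in>UNIV. P1 $ i) = (\<Sum>i\<in>UNIV. P0 $ i) + t * ((\<Sum>i\<in>UNIV. u $ i) - (\<Sum>i\<in>UNIV. P0 $ i))"
      by (simp add: P1_def sum.distrib sum_distrib_left sum_subtractf algebra_simps)
    thus ?thesis using su Psum by simp
  qed
  ultimately have "P1 \<in> prob_simplex_int" by (simp add: prob_simplex_int_def)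
  moreover have "norm (P1 - P0) < \<rho>"
  proof -
    have "norm (P1 - P0) = t * norm (u - P0)" using t by (simp add: P1_def)
    also have "\<dots> \<le> (\<rho> / (2 * (norm (u - P0) + 1))) * norm (u - P0)"
      by (intro mult_right_mono) (auto simp: t_def)
    also have "\<dots> < \<rho>"
    proof -
      have "norm (u - P0) < 2 * (norm (u - P0) + 1)" by (smt (verit) norm_ge_zero)
      moreover have "2 * (norm (u - P0) + 1) > 0" by (smt (verit) norm_ge_zero)
      ultimately have "norm (u - P0) / (2 * (norm (u - P0) + 1)) < 1" by (simp only: divide_less_eq_1_pos)
      hence "\<rho> * (norm (u - P0) / (2 * (norm (u - P0) + 1))) < \<rho> * 1" using rho by (intro mult_strict_left_mono)
      thus ?thesis by simp
    qed
    finally show ?thesis .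
  qed
  ultimately show ?thesis by blast
qed

lemma l_bound:
  fixes l :: "'x::euclidean_space \<Rightarrow> 'd::finite \<Rightarrow> real"
  assumes X: "compact X" and l_cont: "\<And>i. continuous_on X (\<lambda>x. l x i)"
  shows "\<exists>B>0. \<forall>x\<in>X. \<forall>i. \<bar>l x i\<bar> \<le> B"
proof -
  have "\<forall>i. \<exists>b. \<forall>x\<in>X. \<bar>l x i\<bar> \<le> b"
  proof
    fix i
    have "bounded ((\<lambda>x. l x i) ` X)" by (intro compact_imp_bounded compact_continuous_image l_cont X)
    then obtain b where "\<forall>y\<in>(\<lambda>x. l x i) ` X. norm y \<le> b" unfolding bounded_iff by blast
    thus "\<exists>b. \<forall>x\<in>X. \<bar>l x i\<bar> \<le> b" by auto
  qed
  then obtain bf where bf: "\<And>i x. x \<in> X \<Longrightarrow> \<bar>l x i\<bar> \<le> bf i" by metis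
  define B where "B = 1 + (\<Sum>i\<in>UNIV. \<bar>bf i\<bar>)"
  have "\<bar>l x i\<bar> \<le> B" if "x \<in> X" for x i
  proof -
    have "\<bar>bf i\<bar> \<le> (\<Sum>i\<in>UNIV. \<bar>bf i\<bar>)" by (rule member_le_sum) auto
    thus ?thesis using bf[OF that, of i] by (simp add: B_def)
  qed
  moreover have "B > 0" unfolding B_def by (smt (verit) sum_nonneg abs_ge_zero)
  ultimately show ?thesis by blast
qed




theorem mainTheorem3:
  fixes X :: "'x::euclidean_space set"
    and l :: "'x \<Rightarrow> 'd::finite \<Rightarrow> real"
    and a :: "nat \<Rightarrow> real"
    and chat :: "'x \<Rightarrow> real ^ 'd \<Rightarrow> nat \<Rightarrow> real"
  assumes d2: "CARD('d) \<ge> 2"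
    and X_compact: "compact X"
    and l_cont: "\<And>i. continuous_on X (\<lambda>x. l x i)"
    and a_pos: "\<And>T. a T > 0"
    and a_inf: "filterlim a at_top sequentially"
    and a_subexp: "(\<lambda>T. a T / real T) \<longlonglongrightarrow> 0"
    and reg: "regular X chat"
    and oos: "oos_guarantee X l a chat"
  shows "(\<forall>x\<in>X. \<forall>P\<in>prob_simplex. (\<lambda>T. chat x P T) \<longlonglongrightarrow> cost l x P)
         \<or> (\<exists>chat' :: 'x \<Rightarrow> real ^ 'd \<Rightarrow> nat \<Rightarrow> real.
               regular X chat' \<and> oos_guarantee X l a chat' \<and>
               pred_le X l chat' chat \<and> \<not> pred_equiv X l chat' chat)"
proof (cases "\<forall>x\<in>X. \<forall>P\<in>prob_simplex. (\<lambda>T. chat x P T) \<longlonglongrightarrow> cost l x P")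
  case True thus ?thesis by blast
next
  case False
  then obtain x0 P0 where x0: "x0 \<in> X" and P0: "P0 \<in> prob_simplex"
    and nc: "\<not> (\<lambda>T. chat x0 P0 T) \<longlonglongrightarrow> cost l x0 P0" by blast
  obtain \<epsilon> where \<epsilon>: "\<epsilon> > 0"
    and fr: "frequently (\<lambda>T. \<bar>chat x0 P0 T - cost l x0 P0\<bar> \<ge> \<epsilon>) sequentially"
  proof -
    from nc obtain e where "e > 0" "\<not> eventually (\<lambda>T. dist (chat x0 P0 T) (cost l x0 P0) < e) sequentially"
      unfolding tendsto_iff by blast
    hence "frequently (\<lambda>T. \<bar>chat x0 P0 T - cost l x0 P0\<bar> \<ge> e) sequentially"
      by (simp add: not_eventually dist_real_def not_less)
    thus ?thesis using that \<open>e > 0\<close> by blast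
  qed
  obtain B where B: "B > 0" and lB: "\<And>x i. x \<in> X \<Longrightarrow> \<bar>l x i\<bar> \<le> B"
  proof -
    have "\<exists>B>0. \<forall>x\<in>X. \<forall>i. \<bar>l x i\<bar> \<le> B" by (rule l_bound[OF X_compact l_cont])
    thus ?thesis using that by blast
  qed
  define S where "S = X \<times> (prob_simplex :: (real ^ 'd) set)"
  have y0S: "(x0, P0) \<in> S" using x0 P0 by (simp add: S_def)
  obtain U where U: "open U" "(x0, P0) \<in> U"
    "\<forall>T. \<forall>z\<in>U \<inter> S. dist ((\<lambda>T (x,p). chat x p T) T (x0, P0)) ((\<lambda>T (x,p). chat x p T) T z) < \<epsilon>/4"
  proof -
    have "equicont S (\<lambda>T (x,p). chat x p T)" using reg unfolding regular_def S_def by blast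
    thus ?thesis using that y0S \<epsilon> unfolding equicont_def by (meson divide_pos_pos zero_less_numeral)
  qed
  obtain d where d: "d > 0" "\<forall>z\<in>S. dist z (x0, P0) < d \<longrightarrow>
      dist ((\<lambda>(x,p). cost l x p) z) ((\<lambda>(x,p). cost l x p) (x0, P0)) < \<epsilon>/4"
  proof -
    have "continuous_on S (\<lambda>(x,p). cost l x p)" unfolding S_def by (rule cost_cont(1)[OF l_cont])
    hence ci: "\<forall>y\<in>S. \<forall>e>0. \<exists>d>0. \<forall>z\<in>S. dist z y < d \<longrightarrow>
        dist ((\<lambda>(x,p). cost l x p) z) ((\<lambda>(x,p). cost l x p) y) < e"
      unfolding continuous_on_iff .
    have e4: "\<epsilon>/4 > 0" using \<epsilon> by simp
    from ci[rule_format, OF y0S e4] show ?thesis using that by blast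
  qed
  obtain r0 where r0: "r0 > 0" "ball (x0, P0) r0 \<subseteq> U" using U(1,2) open_contains_ball by blast
  obtain P1 where P1: "P1 \<in> prob_simplex_int" and P1d: "norm (P1 - P0) < min r0 d"
    using interior_point[OF P0, of "min r0 d"] r0 d by auto
  have P1s: "P1 \<in> prob_simplex" by (rule simplex_int_sub[OF P1])
  have dist01: "dist (x0, P1) (x0, P0) < min r0 d"
    using P1d by (simp add: dist_Pair_Pair dist_norm)
  have y1S: "(x0, P1) \<in> S" using x0 P1s by (simp add: S_def)
  have y1U: "(x0, P1) \<in> U" using r0(2) dist01 by (auto simp: dist_commute)
  have close_chat: "\<bar>chat x0 P0 T - chat x0 P1 T\<bar> < \<epsilon>/4" for T
    using U(3) y1S y1U by (force simp: dist_real_def)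
  have close_cost: "\<bar>cost l x0 P1 - cost l x0 P0\<bar> < \<epsilon>/4"
    using d(2) y1S dist01 by (force simp: dist_real_def)
  define c1 where "c1 = cost l x0 P1"
  define \<delta> where "\<delta> = \<epsilon> / 8"
  have \<delta>: "\<delta> > 0" using \<epsilon> by (simp add: \<delta>_def)
  have fr1: "frequently (\<lambda>T. chat x0 P1 T - c1 \<ge> 4*\<delta> \<or> chat x0 P1 T - c1 \<le> -(4*\<delta>)) sequentially"
    using fr
  proof (rule frequently_elim1)
    fix T assume h1: "\<bar>chat x0 P0 T - cost l x0 P0\<bar> \<ge> \<epsilon>"
    have dj: "chat x0 P0 T - cost l x0 P0 \<ge> \<epsilon> \<or> chat x0 P0 T - cost l x0 P0 \<le> - \<epsilon>"
      using h1 by (auto simp: abs_if split: if_splits)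
    have h2: "chat x0 P0 T - chat x0 P1 T < \<epsilon>/4" "chat x0 P1 T - chat x0 P0 T < \<epsilon>/4"
      using close_chat[of T] abs_less_iff[of "chat x0 P0 T - chat x0 P1 T" "\<epsilon>/4"] by linarith+
    have h3: "cost l x0 P1 - cost l x0 P0 < \<epsilon>/4" "cost l x0 P0 - cost l x0 P1 < \<epsilon>/4"
      using close_cost abs_less_iff[of "cost l x0 P1 - cost l x0 P0" "\<epsilon>/4"] by linarith+
    show "chat x0 P1 T - c1 \<ge> 4*\<delta> \<or> chat x0 P1 T - c1 \<le> -(4*\<delta>)"
      using dj h2 h3 unfolding c1_def \<delta>_def by (elim disjE; linarith)
  qed
  have regD: "\<forall>x\<in>X. \<forall>P\<in>prob_simplex_int.
        limsup (\<lambda>T. elog (prob_iid P T (\<lambda>\<omega>. cost l x P > chat x (empirical \<omega> T) T)) / ereal (a T)) \<le> -1"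
    using oos unfolding oos_guarantee_def by blast
  show ?thesis
  proof (cases "frequently (\<lambda>T. chat x0 P1 T - c1 \<le> -(4*\<delta>)) sequentially")
    case True
    text \<open>Lower case: raise the predictor.\<close>
    define ch' where "ch' = (\<lambda>x p T. chat x p T + psi \<delta> (cost l x p + - (2*\<delta>) + - chat x p T))"
    have r1: "regular X (\<lambda>x p T. cost l x p + - (2*\<delta>))"
      using reg_cost[OF l_cont lB, of "\<lambda>T. - (2*\<delta>)" "2*\<delta>"] \<delta> by simp
    have "regular X ch'" unfolding ch'_def
      by (rule reg_add[OF reg reg_psi[OF reg_add[OF r1 reg_uminus[OF reg]] \<delta>]])
    moreover have "oos_guarantee X l a ch'" unfolding oos_guarantee_def
    proof (intro ballI)
      fix x and P :: "real ^ 'd" assume x: "x \<in> X" and P: "P \<in> prob_simplex_int"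
      show "limsup (\<lambda>T. elog (prob_iid P T (\<lambda>\<omega>. cost l x P > ch' x (empirical \<omega> T) T)) / ereal (a T)) \<le> -1"
      proof (rule limsup_elog[OF a_pos a_inf regD[rule_format, OF x P], of "\<lambda>T. 0"])
        show "\<forall>\<^sub>F T in sequentially. (0::real) \<le> exp (-2 * a T)" by simp
        fix T
        show "prob_iid P T (\<lambda>\<omega>. cost l x P > ch' x (empirical \<omega> T) T)
              \<le> prob_iid P T (\<lambda>\<omega>. cost l x P > chat x (empirical \<omega> T) T) + 0"
          using prob_mono[OF simplex_int_sub[OF P], of "\<lambda>\<omega>. cost l x P > ch' x (empirical \<omega> T) T"
              "\<lambda>\<omega>. cost l x P > chat x (empirical \<omega> T) T" "\<lambda>_. False" T]
          by (simp add: prob_false ch'_def) (meson low_ge[OF \<delta>] order.strict_trans1)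
      qed
    qed
    moreover have "pred_le X l ch' chat" unfolding pred_le_def
      by (intro ballI limsup_le1) (unfold ch'_def, rule low_le[OF \<delta>])
    moreover have "\<not> pred_equiv X l ch' chat" unfolding pred_equiv_def
    proof
      assume "\<forall>x\<in>X. \<forall>P\<in>prob_simplex_int.
        ((\<lambda>T. err_ratio (ch' x P T - cost l x P) (chat x P T - cost l x P)) \<longlongrightarrow> 1) sequentially"
      hence tl1: "((\<lambda>T. err_ratio (ch' x0 P1 T - c1) (chat x0 P1 T - c1)) \<longlongrightarrow> 1) sequentially"
        using x0 P1 by (simp add: c1_def)
      have fq: "frequently (\<lambda>T. err_ratio (ch' x0 P1 T - c1) (chat x0 P1 T - c1) \<le> ereal (5/8)) sequentially"
        using True by (rule frequently_elim1) (unfold ch'_def c1_def, rule low_strict[OF \<delta>], assumption)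
      show False using not_tendsto1[OF fq] tl1 by blast
    qed
    ultimately show ?thesis by blast
  next
    case False
    with fr1 have frU: "frequently (\<lambda>T. chat x0 P1 T - c1 \<ge> 4*\<delta>) sequentially"
      by (simp add: frequently_disj_iff)
    text \<open>Upper case: lower the predictor.\<close>
    define r where "r = (\<lambda>T. 2 * B * sqrt (8 * (a T / real T)))"
    have r0': "r T \<ge> 0" for T
    proof -
      have "0 \<le> 8 * (a T / real T)" using a_pos[of T] by simp
      hence "0 \<le> sqrt (8 * (a T / real T))" by simp
      thus ?thesis using B unfolding r_def by simp
    qed
    have rlim: "r \<longlonglongrightarrow> 0"
    proof -
      have "(\<lambda>T. 2 * B * sqrt (8 * (a T / real T))) \<longlonglongrightarrow> 2 * B * sqrt (8 * 0)"
        by (intro tendsto_intros a_subexp)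
      thus ?thesis by (simp add: r_def)
    qed
    obtain Br where Br: "\<And>T. \<bar>r T\<bar> \<le> Br"
    proof -
      have "Bseq r" using rlim by (rule convergent_imp_Bseq[OF convergentI])
      then obtain K where K: "\<And>T. norm (r T) \<le> K" unfolding Bseq_def by blast
      have "\<And>T. \<bar>r T\<bar> \<le> K" using K by simp
      thus ?thesis by (rule that)
    qed
    have rsmall: "eventually (\<lambda>T. r T \<le> \<delta>) sequentially"
      using order_tendstoD(2)[OF rlim \<delta>] by (rule eventually_mono) simp
    define ch' where "ch' = (\<lambda>x p T. chat x p T + - psi \<delta> (chat x p T + - (cost l x p + r T)))"
    have r1: "regular X (\<lambda>x p T. cost l x p + r T)"
      by (rule reg_cost[OF l_cont lB Br])
    have "regular X ch'" unfolding ch'_def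
      by (rule reg_add[OF reg reg_uminus[OF reg_psi[OF reg_add[OF reg reg_uminus[OF r1]] \<delta>]]])
    moreover have "oos_guarantee X l a ch'" unfolding oos_guarantee_def
    proof (intro ballI)
      fix x and P :: "real ^ 'd" assume x: "x \<in> X" and P: "P \<in> prob_simplex_int"
      have Ps: "P \<in> prob_simplex" by (rule simplex_int_sub[OF P])
      show "limsup (\<lambda>T. elog (prob_iid P T (\<lambda>\<omega>. cost l x P > ch' x (empirical \<omega> T) T)) / ereal (a T)) \<le> -1"
      proof (rule limsup_elog[OF a_pos a_inf regD[rule_format, OF x P],
            of "\<lambda>T. prob_iid P T (\<lambda>\<omega>. cost l x P > cost l x (empirical \<omega> T) + r T)"])
        have ev1: "eventually (\<lambda>T. a T / real T < 1/2) sequentially"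
          using order_tendstoD(2)[OF a_subexp, of "1/2"] by simp
        show "\<forall>\<^sub>F T in sequentially. prob_iid P T (\<lambda>\<omega>. cost l x P > cost l x (empirical \<omega> T) + r T)
                \<le> exp (-2 * a T)"
          using ev1 eventually_gt_at_top[of 0]
        proof eventually_elim
          case (elim T)
          show ?case unfolding r_def
            using conc2[of P l x B T "a T", OF Ps lB[OF x] B elim(2)] a_pos[of T] elim(1) by simp
        qed
        fix T
        show "prob_iid P T (\<lambda>\<omega>. cost l x P > ch' x (empirical \<omega> T) T)
              \<le> prob_iid P T (\<lambda>\<omega>. cost l x P > chat x (empirical \<omega> T) T)
                + prob_iid P T (\<lambda>\<omega>. cost l x P > cost l x (empirical \<omega> T) + r T)"
          by (rule prob_mono[OF Ps]) (simp add: ch'_def up_min[OF \<delta>])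
      qed
    qed
    moreover have "pred_le X l ch' chat" unfolding pred_le_def
      by (intro ballI limsup_le1) (unfold ch'_def, rule up_le[OF \<delta> r0'])
    moreover have "\<not> pred_equiv X l ch' chat" unfolding pred_equiv_def
    proof
      assume "\<forall>x\<in>X. \<forall>P\<in>prob_simplex_int.
        ((\<lambda>T. err_ratio (ch' x P T - cost l x P) (chat x P T - cost l x P)) \<longlongrightarrow> 1) sequentially"
      hence tl1: "((\<lambda>T. err_ratio (ch' x0 P1 T - c1) (chat x0 P1 T - c1)) \<longlongrightarrow> 1) sequentially"
        using x0 P1 by (simp add: c1_def)
      have fq: "frequently (\<lambda>T. err_ratio (ch' x0 P1 T - c1) (chat x0 P1 T - c1) \<le> ereal (5/8)) sequentially"
        using frequently_eventually_conj[OF frU rsmall]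
        by (rule frequently_elim1) (unfold ch'_def c1_def, rule up_strict[OF \<delta> r0'], auto)
      show False using not_tendsto1[OF fq] tl1 by blast
    qed
    ultimately show ?thesis by blast
  qed
qed


end
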